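(* Let $S_j$ be local potentials satisfying (A)–(E). For every $\omega\in\mathbb{R}^d$ there exists a global minimizer $x\in\overline{\mathcal{B}}_\omega$, i.e. a Birkhoff global minimizer with rotation vector $\omega$ such that $\tau_{k,l}x=x$ for all $(k,l)\in\mathbb{Z}^d\times\mathbb{Z}$ with $\langle\omega,k\rangle+l=0$.
   Context: Notation: $\|i\|=\sum_{k=1}^d|i_k|$, $B_j^r=\{k:\|k-j\|\le r\}$, $(\tau_{k,l}x)_i=x_{i+k}+l$. Local potentials $S_j:\mathbb{R}^{\mathbb{Z}^d}\to\mathbb{R}$, $j\in\mathbb{Z}^d$, satisfy: (A) there is $r\in(0,\infty)$ and $C^2$ functions $s_j:\mathbb{R}^{B_j^r}\to\mathbb{R}$ with $S_j(x)=s_j(x|_{B_j^r})$; (B) $S_j(\tau_{k,l}x)=S_{j+k}(x)$; (C) each $S_j$ is bounded below and $S_j(x)\to\infty$ as $|x_k-x_j|\to\infty$ whenever $\|k-j\|=1$; (D) $\partial_{i,k}S_j\le0$ for $i\ne k$, and $\partial_{i,k}S_i<0$ when $\|i-k\|=1$; (E) $|\partial_{i,k}S_j|\le C$ uniformly. A configuration $x$ is Birkhoff if for every $(k,l)$, $\tau_{k,l}x\ge x$ or $\tau_{k,l}x\le x$ (pointwise order). $\omega$ is the rotation vector of $x$ if $\lim_{n\to\infty}x_{ni}/n=\langle\omega,i\rangle$ for all $i$. $\overline{\mathcal{B}}_\omega$ is the set of Birkhoff configurations with rotation vector $\omega$ satisfying $\tau_{k,l}x=x$ whenever $\langle\omega,k\rangle+l=0$.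 For finite $B$: $W_B=\sum_{j\in B}S_j$, $\mathring{B}^{(r)}=\{i\in B:B_i^r\subset B\}$; $x$ is a global minimizer if $W_B(x+y)\ge W_B(x)$ for all finite $B$ and all $y$ supported in $\mathring{B}^{(r)}$. *)

theory Defs
  imports "HOL-Analysis.Analysis"
begin

(* Lattice points Z^d are int ^ 'd ('d a finite index type, d = CARD('d));
   configurations are maps (int ^ 'd) \<Rightarrow> real. *)

type_synonym 'd config = "int ^ 'd \<Rightarrow> real"

definition norm1 :: "int ^ 'd::finite \<Rightarrow> int" where
  "norm1 i = (\<Sum>k\<in>UNIV. \<bar>i $ k\<bar>)"

definition lball :: "int ^ 'd::finite \<Rightarrow> real \<Rightarrow> (int ^ 'd) set" where
  "lball j r = {k. real_of_int (norm1 (k - j)) \<le> r}"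

definition tau :: "int ^ 'd::finite \<Rightarrow> int \<Rightarrow> 'd config \<Rightarrow> 'd config" where
  "tau k l x = (\<lambda>i. x (i + k) + real_of_int l)"

definition ip :: "real ^ 'd::finite \<Rightarrow> int ^ 'd \<Rightarrow> real" where
  "ip \<omega> k = (\<Sum>m\<in>UNIV. \<omega> $ m * real_of_int (k $ m))"

definition pd :: "'i \<Rightarrow> (('i \<Rightarrow> real) \<Rightarrow> real) \<Rightarrow> ('i \<Rightarrow> real) \<Rightarrow> real" where
  "pd i F x = deriv (\<lambda>t. F (x(i := x i + t))) 0"

(* C^2: all partial derivatives of order \<le> 2 exist and are continuous
   (continuity w.r.t. the product topology; for functions depending on finitely
   many coordinates this is ordinary C^2 on R^B) *)
definition C2 :: "(('i \<Rightarrow> real) \<Rightarrow> real) \<Rightarrow> bool" where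
  "C2 F \<longleftrightarrow> continuous_on UNIV F
     \<and> (\<forall>i x. (\<lambda>t. F (x(i := x i + t))) differentiable (at 0))
     \<and> (\<forall>i. continuous_on UNIV (pd i F))
     \<and> (\<forall>i k x. (\<lambda>t. pd k F (x(i := x i + t))) differentiable (at 0))
     \<and> (\<forall>i k. continuous_on UNIV (pd i (pd k F)))"

definition birkhoff :: "'d::finite config \<Rightarrow> bool" where
  "birkhoff x \<longleftrightarrow> (\<forall>k l. tau k l x \<ge> x \<or> tau k l x \<le> x)"

definition has_rotation_vector :: "'d::finite config \<Rightarrow> real ^ 'd \<Rightarrow> bool" where
  "has_rotation_vector x \<omega> \<longleftrightarrow>
     (\<forall>i. (\<lambda>n::nat. x (of_nat n *s i) / real n) \<longlonglongrightarrow> ip \<omega> i)"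

definition Bbar :: "real ^ 'd::finite \<Rightarrow> 'd config set" where
  "Bbar \<omega> = {x. birkhoff x \<and> has_rotation_vector x \<omega> \<and>
                 (\<forall>k l. ip \<omega> k + real_of_int l = 0 \<longrightarrow> tau k l x = x)}"

definition WB :: "(int ^ 'd::finite \<Rightarrow> 'd config \<Rightarrow> real) \<Rightarrow> (int ^ 'd) set \<Rightarrow> 'd config \<Rightarrow> real" where
  "WB S B x = (\<Sum>j\<in>B. S j x)"

definition interior_r :: "(int ^ 'd::finite) set \<Rightarrow> real \<Rightarrow> (int ^ 'd) set" where
  "interior_r B r = {i\<in>B. lball i r \<subseteq> B}"

definition global_minimizer ::
  "(int ^ 'd::finite \<Rightarrow> 'd config \<Rightarrow> real) \<Rightarrow> real \<Rightarrow> 'd config \<Rightarrow> bool" where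
  "global_minimizer S r x \<longleftrightarrow>
     (\<forall>B y. finite B \<longrightarrow> (\<forall>i. i \<notin> interior_r B r \<longrightarrow> y i = 0) \<longrightarrow>
        WB S B (\<lambda>i. x i + y i) \<ge> WB S B x)"

end

theory Submission
  imports Defs "HOL-Analysis.Function_Metric"
begin

lemma tendsto_fun_iff:
  fixes f :: "'b \<Rightarrow> 'a \<Rightarrow> real"
  shows "(f \<longlongrightarrow> l) F \<longleftrightarrow> (\<forall>i. ((\<lambda>n. f n i) \<longlongrightarrow> l i) F)"
proof -
  have "(f \<longlongrightarrow> l) F \<longleftrightarrow> limitin (product_topology (\<lambda>i. euclidean) UNIV) f l F"
    by (simp add: euclidean_product_topology limitin_canonical_iff)
  also have "\<dots> \<longleftrightarrow> (\<forall>i. ((\<lambda>n. f n i) \<longlongrightarrow> l i) F)"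
    by (simp add: limitin_componentwise limitin_canonical_iff)
  finally show ?thesis .
qed

lemma line_deriv:
  assumes "\<forall>i x. (\<lambda>t. F (x(i := x i + t))) differentiable (at (0::real))"
  shows "((\<lambda>t. F (y(i := t))) has_real_derivative pd i F (y(i := t0))) (at t0)"
proof -
  let ?y = "y(i := t0)"
  have "(\<lambda>t. F (?y(i := ?y i + t))) differentiable (at 0)" using assms by blast
  hence "((\<lambda>t. F (?y(i := ?y i + t))) has_real_derivative pd i F ?y) (at 0)"
    unfolding pd_def using DERIV_deriv_iff_real_differentiable by blast
  hence "((\<lambda>t. F (y(i := t + t0))) has_real_derivative pd i F ?y) (at 0)"
    by (simp add: add.commute)
  thus ?thesis using DERIV_shift[of "\<lambda>t. F (y(i := t))" "pd i F ?y" 0 t0] by simp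
qed

lemma two_dim:
  assumes C: "C2 F" and D: "\<And>i k x. i \<noteq> k \<Longrightarrow> pd i (pd k F) x \<le> 0"
    and ik: "i \<noteq> k" and a: "a \<le> a'" and b: "b \<le> (b'::real)"
  shows "F (y(k := b', i := a')) - F (y(k := b', i := a)) \<le> F (y(k := b, i := a')) - F (y(k := b, i := a))"
proof -
  have d1: "\<forall>i x. (\<lambda>t. F (x(i := x i + t))) differentiable (at 0)" using C unfolding C2_def by blast
  have d2: "\<forall>k x. (\<lambda>t. pd i F (x(k := x k + t))) differentiable (at 0)" using C unfolding C2_def by blast
  define phi where "phi t = F (y(k := b', i := t)) - F (y(k := b, i := t))" for t
  have "phi a' \<le> phi a"
  proof (rule DERIV_nonpos_imp_nonincreasing[OF a])
    fix t assume "a \<le> t" "t \<le> a'"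
    have "(phi has_real_derivative pd i F (y(k := b', i := t)) - pd i F (y(k := b, i := t))) (at t)"
      unfolding phi_def
      by (intro DERIV_diff line_deriv[OF d1])
    moreover have "pd i F (y(k := b', i := t)) \<le> pd i F (y(k := b, i := t))"
    proof -
      have e: "y(k := s, i := t) = (y(i := t))(k := s)" for s using ik by (simp add: fun_upd_twist)
      have "(\<lambda>s. pd i F ((y(i := t))(k := s))) b' \<le> (\<lambda>s. pd i F ((y(i := t))(k := s))) b"
      proof (rule DERIV_nonpos_imp_nonincreasing[OF b])
        fix s assume "b \<le> s" "s \<le> b'"
        show "\<exists>z. ((\<lambda>s. pd i F ((y(i := t))(k := s))) has_real_derivative z) (at s) \<and> z \<le> 0"
          using line_deriv[OF d2, of "y(i := t)" k s] D[of k i "y(i := t, k := s)"] ik by blast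
      qed
      thus ?thesis by (simp add: e)
    qed
    ultimately show "\<exists>z. (phi has_real_derivative z) (at t) \<and> z \<le> 0" by force
  qed
  thus ?thesis unfolding phi_def by simp
qed

lemma single_coord:
  assumes C: "C2 F" and D: "\<And>i k x. i \<noteq> k \<Longrightarrow> pd i (pd k F) x \<le> 0"
    and B: "finite B" and iB: "i \<notin> B" and le: "\<forall>j. y j \<le> y' j"
    and eq: "\<forall>j. j \<notin> B \<longrightarrow> y' j = y j" and a: "a \<le> (a'::real)"
  shows "F (y'(i := a')) - F (y'(i := a)) \<le> F (y(i := a')) - F (y(i := a))"
  using B iB le eq
proof (induction B arbitrary: y' rule: finite_induct)
  case empty
  hence "y' = y" by auto
  thus ?case by simp
next
  case (insert k B)
  define y'' where "y'' = y'(k := y k)"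
  have IH: "F (y''(i := a')) - F (y''(i := a)) \<le> F (y(i := a')) - F (y(i := a))"
    using insert by (intro insert.IH) (auto simp: y''_def)
  have ik: "i \<noteq> k" using insert by auto
  have "F (y''(k := y' k, i := a')) - F (y''(k := y' k, i := a)) \<le> F (y''(k := y k, i := a')) - F (y''(k := y k, i := a))"
    using insert by (intro two_dim[OF C D ik a]) auto
  moreover have "y''(k := y' k) = y'" "y''(k := y k) = y''" by (auto simp: y''_def)
  ultimately have "F (y'(i := a')) - F (y'(i := a)) \<le> F (y''(i := a')) - F (y''(i := a))" by metis
  thus ?case using IH by linarith
qed

lemma submod_fin:
  assumes C: "C2 F" and D: "\<And>i k x. i \<noteq> k \<Longrightarrow> pd i (pd k F) x \<le> 0"
    and L: "finite L" and eq: "\<forall>j. j \<notin> L \<longrightarrow> z j = x j"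
  shows "F (\<lambda>j. min (x j) (z j)) + F (\<lambda>j. max (x j) (z j)) \<le> F x + F z"
  using L eq
proof (induction L arbitrary: z rule: finite_induct)
  case empty
  hence "z = x" by auto
  thus ?case by (simp add: min_def max_def)
next
  case (insert i L)
  define z1 where "z1 = z(i := x i)"
  have IH: "F (\<lambda>j. min (x j) (z1 j)) + F (\<lambda>j. max (x j) (z1 j)) \<le> F x + F z1"
    using insert by (intro insert.IH) (auto simp: z1_def)
  have zz: "z = z1(i := z i)" by (auto simp: z1_def)
  show ?case
  proof (cases "x i \<le> z i")
    case True
    have m1: "(\<lambda>j. min (x j) (z j)) = (\<lambda>j. min (x j) (z1 j))" using True by (auto simp: z1_def)
    have m2: "(\<lambda>j. max (x j) (z j)) = (\<lambda>j. max (x j) (z1 j))(i := z i)" using True by (auto simp: z1_def)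
    have m3: "(\<lambda>j. max (x j) (z1 j))(i := x i) = (\<lambda>j. max (x j) (z1 j))" by (auto simp: z1_def)
    have m4: "z1(i := x i) = z1" by (auto simp: z1_def)
    have "F ((\<lambda>j. max (x j) (z1 j))(i := z i)) - F ((\<lambda>j. max (x j) (z1 j))(i := x i))
        \<le> F (z1(i := z i)) - F (z1(i := x i))"
      using insert True by (intro single_coord[OF C D, of L]) (auto simp: z1_def)
    thus ?thesis using IH m1 m2 m3 m4 zz by simp
  next
    case False
    have m1: "(\<lambda>j. min (x j) (z j)) = (\<lambda>j. min (x j) (z1 j))(i := z i)" using False by (auto simp: z1_def)
    have m2: "(\<lambda>j. max (x j) (z j)) = (\<lambda>j. max (x j) (z1 j))" using False by (auto simp: z1_def)
    have m3: "(\<lambda>j. min (x j) (z1 j))(i := x i) = (\<lambda>j. min (x j) (z1 j))" by (auto simp: z1_def)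
    have m4: "z1(i := x i) = z1" by (auto simp: z1_def)
    have "F (z1(i := x i)) - F (z1(i := z i))
        \<le> F ((\<lambda>j. min (x j) (z1 j))(i := x i)) - F ((\<lambda>j. min (x j) (z1 j))(i := z i))"
      using insert False by (intro single_coord[OF C D, of L]) (auto simp: z1_def)
    thus ?thesis using IH m1 m2 m3 m4 zz by simp
  qed
qed

lemma finite_ibox: "finite {u :: int^'d::finite. \<forall>m. a m \<le> u$m \<and> u$m \<le> b m}"
proof -
  have "{u :: int^'d. \<forall>m. a m \<le> u$m \<and> u$m \<le> b m} \<subseteq> vec_lambda ` (PiE UNIV (\<lambda>m. {a m..b m}))"
  proof
    fix u :: "int^'d" assume "u \<in> {u. \<forall>m. a m \<le> u$m \<and> u$m \<le> b m}"
    hence "(\<lambda>m. u$m) \<in> PiE UNIV (\<lambda>m. {a m..b m})" by auto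
    moreover have "u = vec_lambda (\<lambda>m. u$m)" by simp
    ultimately show "u \<in> vec_lambda ` (PiE UNIV (\<lambda>m. {a m..b m}))" by blast
  qed
  moreover have "finite (PiE (UNIV::'d set) (\<lambda>m. {a m..b m}))" by (intro finite_PiE) auto
  ultimately show ?thesis by (meson finite_imageI finite_subset)
qed

lemma comp_le_norm1: "\<bar>v $ m\<bar> \<le> norm1 v"
  unfolding norm1_def by (rule member_le_sum[of m UNIV "\<lambda>k. \<bar>v$k\<bar>"]) auto

lemma norm1_nonneg: "0 \<le> norm1 v"
  unfolding norm1_def by (rule sum_nonneg) auto

lemma norm1_minus_commute: "norm1 (a - b) = norm1 (b - a)"
  unfolding norm1_def by (intro sum.cong) auto

lemma norm1_zero_iff: "norm1 v = 0 \<longleftrightarrow> v = 0"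
proof
  assume "norm1 v = 0"
  hence "\<forall>m\<in>UNIV. \<bar>v$m\<bar> = 0" unfolding norm1_def by (subst sum_nonneg_eq_0_iff[symmetric]) auto
  thus "v = 0" by (simp add: vec_eq_iff)
qed (simp add: norm1_def)

lemma lball_finite: "finite (lball j (r::real))"
proof -
  have "lball j r \<subseteq> {u. \<forall>m. j$m - \<lceil>r\<rceil> \<le> u$m \<and> u$m \<le> j$m + \<lceil>r\<rceil>}"
  proof
    fix u assume "u \<in> lball j r"
    hence "real_of_int (norm1 (u - j)) \<le> r" by (simp add: lball_def)
    hence "norm1 (u - j) \<le> \<lceil>r\<rceil>" by linarith
    hence b: "\<bar>u$m - j$m\<bar> \<le> \<lceil>r\<rceil>" for m using comp_le_norm1[of "u - j" m] by simp
    have "j$m - \<lceil>r\<rceil> \<le> u$m \<and> u$m \<le> j$m + \<lceil>r\<rceil>" for m using b[of m] unfolding abs_le_iff by linarith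
    thus "u \<in> {u. \<forall>m. j$m - \<lceil>r\<rceil> \<le> u$m \<and> u$m \<le> j$m + \<lceil>r\<rceil>}" by blast
  qed
  thus ?thesis using finite_ibox finite_subset by fastforce
qed

lemma tau_tau: "tau k l (tau k' l' x) = tau (k + k') (l + l') x"
  by (auto simp: tau_def fun_eq_iff algebra_simps)

lemma tau_0: "tau 0 0 x = x" by (simp add: tau_def)

lemma tau_mono: "x \<le> y \<Longrightarrow> tau k l x \<le> tau k l y"
  by (auto simp: tau_def le_fun_def)

lemma tau_apply: "tau k l x i = x (i + k) + real_of_int l" by (simp add: tau_def)

lemma finite_uniform_bound:
  assumes "finite U" "\<forall>u\<in>U. \<exists>R::real. \<forall>R'\<ge>R. P u R'"
  shows "\<exists>R. \<forall>u\<in>U. P u R"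
proof -
  have "\<exists>R. \<forall>R'\<ge>R. \<forall>u\<in>U. P u R'" using assms
  proof (induction U rule: finite_induct)
    case (insert a U)
    then obtain R1 where R1: "\<forall>R'\<ge>R1. \<forall>u\<in>U. P u R'" by auto
    obtain R2 where R2: "\<forall>R'\<ge>R2. P a R'" using insert by auto
    show ?case by (rule exI[of _ "max R1 R2"]) (use R1 R2 in auto)
  qed simp
  thus ?thesis by auto
qed

locale LS =
  fixes S :: "int ^ 'd::finite \<Rightarrow> (int ^ 'd \<Rightarrow> real) \<Rightarrow> real"
    and r :: real
  assumes A_r: "r > 0"
    and A_local: "\<And>j x y. (\<forall>k\<in>lball j r. x k = y k) \<Longrightarrow> S j x = S j y"
    and A_C2: "\<And>j. C2 (S j)"
    and B: "\<And>j k l x. S j (tau k l x) = S (j + k) x"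
    and C_bdd: "\<And>j. \<exists>m. \<forall>x. S j x \<ge> m"
    and C_coerc: "\<And>j k. norm1 (k - j) = 1 \<Longrightarrow>
        filterlim (S j) at_top (filtercomap (\<lambda>x. \<bar>x k - x j\<bar>) at_top)"
    and D1: "\<And>i k j x. i \<noteq> k \<Longrightarrow> pd i (pd k (S j)) x \<le> 0"
begin

lemma submod: "S j (\<lambda>i. min (x i) (z i)) + S j (\<lambda>i. max (x i) (z i)) \<le> S j x + S j z"
proof -
  define z' where "z' = (\<lambda>i. if i \<in> lball j r then z i else x i)"
  have "S j (\<lambda>i. min (x i) (z' i)) + S j (\<lambda>i. max (x i) (z' i)) \<le> S j x + S j z'"
    by (rule submod_fin[OF A_C2 D1 lball_finite]) (auto simp: z'_def)
  moreover have "S j z' = S j z" by (intro A_local) (auto simp: z'_def)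
  moreover have "S j (\<lambda>i. min (x i) (z' i)) = S j (\<lambda>i. min (x i) (z i))" by (intro A_local) (auto simp: z'_def)
  moreover have "S j (\<lambda>i. max (x i) (z' i)) = S j (\<lambda>i. max (x i) (z i))" by (intro A_local) (auto simp: z'_def)
  ultimately show ?thesis by simp
qed

lemma S_tau0: "S j x = S 0 (tau j 0 x)" using B[of 0 j 0 x] by simp

lemma S_lower: "\<exists>m0. \<forall>j x. m0 \<le> S j x"
proof -
  obtain m0 where "\<forall>x. S 0 x \<ge> m0" using C_bdd by blast
  thus ?thesis by (metis S_tau0)
qed

lemma S_shift: "S j (\<lambda>i. x i + real_of_int l) = S j x"
  using B[of j 0 l x] by (simp add: tau_def)

lemma S_cont: "continuous_on UNIV (S j)" using A_C2 unfolding C2_def by blast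

lemma coerc_bound: "\<exists>R. \<forall>j k x. norm1 (k - j) = 1 \<longrightarrow> S j x \<le> c \<longrightarrow> \<bar>x k - x j\<bar> \<le> R"
proof -
  let ?U = "{u :: int^'d. norm1 u = 1}"
  have fin: "finite ?U"
  proof -
    have "?U \<subseteq> {u. \<forall>m. -1 \<le> u$m \<and> u$m \<le> 1}"
    proof
      fix u :: "int^'d" assume "u \<in> ?U"
      hence "\<bar>u$m\<bar> \<le> 1" for m using comp_le_norm1[of u m] by simp
      hence "-1 \<le> u$m \<and> u$m \<le> 1" for m unfolding abs_le_iff by (metis minus_le_iff)
      thus "u \<in> {u. \<forall>m. -1 \<le> u$m \<and> u$m \<le> 1}" by blast
    qed
    thus ?thesis using finite_ibox finite_subset by fastforce
  qed
  have "\<forall>u\<in>?U. \<exists>R. \<forall>R'\<ge>R. \<forall>x. S 0 x \<le> c \<longrightarrow> \<bar>x u - x 0\<bar> \<le> R'"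
  proof
    fix u assume "u \<in> ?U"
    hence "filterlim (S 0) at_top (filtercomap (\<lambda>x. \<bar>x u - x 0\<bar>) at_top)"
      by (intro C_coerc) simp
    hence "eventually (\<lambda>x. c + 1 \<le> S 0 x) (filtercomap (\<lambda>x. \<bar>x u - x 0\<bar>) at_top)"
      by (simp add: filterlim_at_top)
    then obtain Q where Q: "eventually Q at_top" "\<forall>x. Q \<bar>x u - x 0\<bar> \<longrightarrow> c + 1 \<le> S 0 x"
      by (auto simp: eventually_filtercomap)
    then obtain N where N: "\<forall>n\<ge>N. Q n" by (auto simp: eventually_at_top_linorder)
    show "\<exists>R. \<forall>R'\<ge>R. \<forall>x. S 0 x \<le> c \<longrightarrow> \<bar>x u - x 0\<bar> \<le> R'"
    proof (rule exI[of _ N], safe)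
      fix R' x assume "N \<le> R'" "S 0 x \<le> c"
      show "\<bar>x u - x 0\<bar> \<le> R'"
      proof (rule ccontr)
        assume "\<not> ?thesis"
        hence "Q \<bar>x u - x 0\<bar>" using N \<open>N \<le> R'\<close> by auto
        thus False using Q(2) \<open>S 0 x \<le> c\<close> by fastforce
      qed
    qed
  qed
  then obtain R where R: "\<forall>u\<in>?U. \<forall>x. S 0 x \<le> c \<longrightarrow> \<bar>x u - x 0\<bar> \<le> R"
    using finite_uniform_bound[OF fin, of "\<lambda>u R. \<forall>x. S 0 x \<le> c \<longrightarrow> \<bar>x u - x 0\<bar> \<le> R"] by blast
  show ?thesis
  proof (rule exI[of _ R], safe)
    fix j k x assume "norm1 (k - j) = 1" "S j x \<le> c"
    hence "\<bar>tau j 0 x (k - j) - tau j 0 x 0\<bar> \<le> R" using R S_tau0[of j x] by auto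
    thus "\<bar>x k - x j\<bar> \<le> R" by (simp add: tau_def)
  qed
qed

end

lemma norm1_split: "norm1 v = \<bar>v$m\<bar> + (\<Sum>k\<in>UNIV - {m}. \<bar>v$k\<bar>)"
  unfolding norm1_def by (simp add: sum.remove)

lemma abs_sub_sgn: "(t::int) \<noteq> 0 \<Longrightarrow> \<bar>t - sgn t\<bar> = \<bar>t\<bar> - 1"
  by (cases "t > 0") (auto simp: sgn_if)

lemma path_bound:
  fixes x :: "int^'d::finite \<Rightarrow> real"
  assumes nb: "\<forall>j k. norm1 (k - j) = 1 \<longrightarrow> \<bar>x k - x j\<bar> \<le> R"
  shows "\<bar>x i - x j\<bar> \<le> R * real_of_int (norm1 (i - j))"
proof -
  have "\<forall>i. nat (norm1 (i - j)) = n \<longrightarrow> \<bar>x i - x j\<bar> \<le> R * real_of_int (norm1 (i - j))" for n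
  proof (induction n)
    case 0
    show ?case
    proof safe
      fix i assume "nat (norm1 (i - j)) = 0"
      hence n0: "norm1 (i - j) = 0" using norm1_nonneg[of "i - j"] by (simp add: nat_eq_iff)
      hence "i - j = 0" using norm1_zero_iff[of "i - j"] by blast
      hence "i = j" by simp
      thus "\<bar>x i - x j\<bar> \<le> R * real_of_int (norm1 (i - j))" using n0 by simp
    qed
  next
    case (Suc n)
    show ?case
    proof safe
      fix i assume ni: "nat (norm1 (i - j)) = Suc n"
      have "i - j \<noteq> 0"
      proof
        assume "i - j = 0"
        hence "norm1 (i - j) = 0" by (simp add: norm1_zero_iff)
        thus False using ni by simp
      qed
      then obtain m where m: "(i - j)$m \<noteq> 0" by (auto simp: vec_eq_iff)
      define s where "s = sgn ((i - j)$m)"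
      define e :: "int^'d" where "e = (\<chi> k. if k = m then s else 0)"
      define i' where "i' = i - e"
      have abs_s: "\<bar>s\<bar> = 1" using m by (simp add: s_def abs_sgn_eq_1)
      have comp: "(i' - j)$k = (i - j)$k - (if k = m then s else 0)" for k
        by (simp add: i'_def e_def)
      have comp2: "\<bar>(i - i')$k\<bar> = (if k = m then 1 else 0)" for k
        using abs_s by (simp add: i'_def e_def)
      have a1: "\<bar>(i' - j)$m\<bar> = \<bar>(i - j)$m\<bar> - 1"
      proof -
        have "(i' - j)$m = (i - j)$m - sgn ((i - j)$m)" using comp[of m] by (simp add: s_def)
        thus ?thesis using abs_sub_sgn[OF m] by simp
      qed
      have a2: "(\<Sum>k\<in>UNIV - {m}. \<bar>(i' - j)$k\<bar>) = (\<Sum>k\<in>UNIV - {m}. \<bar>(i - j)$k\<bar>)"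
        using comp by (intro sum.cong refl) auto
      have n1: "norm1 (i' - j) = norm1 (i - j) - 1"
        using norm1_split[of "i' - j" m] norm1_split[of "i - j" m] a1 a2 by linarith
      have n2: "norm1 (i - i') = 1"
        unfolding norm1_def comp2 by simp
      have "nat (norm1 (i' - j)) = n" using n1 ni by simp
      hence IH: "\<bar>x i' - x j\<bar> \<le> R * real_of_int (norm1 (i' - j))" using Suc by blast
      have "\<bar>x i - x i'\<bar> \<le> R" using nb n2 by (metis norm1_minus_commute)
      hence "\<bar>x i - x j\<bar> \<le> R + R * real_of_int (norm1 (i' - j))" using IH by linarith
      also have "\<dots> = R * real_of_int (norm1 (i - j))"
      proof -
        have "real_of_int (norm1 (i - j)) = real_of_int (norm1 (i' - j)) + 1" using n1 by simp
        thus ?thesis by (simp add: algebra_simps)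
      qed
      finally show "\<bar>x i - x j\<bar> \<le> R * real_of_int (norm1 (i - j))" .
    qed
  qed
  thus ?thesis by blast
qed

definition ipz :: "int^'d::finite \<Rightarrow> int^'d \<Rightarrow> int" where
  "ipz P v = (\<Sum>m\<in>UNIV. P$m * v$m)"
definition per :: "int \<Rightarrow> int^'d::finite \<Rightarrow> (int^'d \<Rightarrow> real) \<Rightarrow> bool" where
  "per Q P x \<longleftrightarrow> (\<forall>i v. x (i + Q *s v) = x i + real_of_int (ipz P v))"
definition vmod :: "int \<Rightarrow> int^'d::finite \<Rightarrow> int^'d" where "vmod Q i = (\<chi> m. i$m mod Q)"
definition vdiv :: "int \<Rightarrow> int^'d::finite \<Rightarrow> int^'d" where "vdiv Q i = (\<chi> m. i$m div Q)"
definition pbox :: "int \<Rightarrow> (int^'d::finite) set" where "pbox Q = {j. \<forall>m. 0 \<le> j$m \<and> j$m < Q}"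
definition om :: "int \<Rightarrow> int^'d::finite \<Rightarrow> real^'d" where
  "om Q P = (\<chi> m. real_of_int (P$m) / real_of_int Q)"

lemma vmod_vdiv: "i = vmod Q i + Q *s vdiv Q i"
  by (simp add: vec_eq_iff vmod_def vdiv_def)

lemma vmod_box: "Q > 0 \<Longrightarrow> vmod Q i \<in> pbox Q"
  by (simp add: vmod_def pbox_def)

lemma box_finite: "finite (pbox Q)"
  unfolding pbox_def using finite_ibox[of "\<lambda>_. 0" "\<lambda>_. Q - 1"]
  by (rule finite_subset[rotated]) auto

lemma vmod_add_mult: "vmod Q (i + Q *s v) = vmod Q i"
  by (simp add: vec_eq_iff vmod_def)

lemma vmod_box_id: "j \<in> pbox Q \<Longrightarrow> vmod Q j = j"
  by (simp add: vec_eq_iff vmod_def pbox_def)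

lemma ipz_add: "ipz P (a + b) = ipz P a + ipz P b"
  by (simp add: ipz_def algebra_simps sum.distrib)

lemma ipz_neg: "ipz P (- a) = - ipz P a"
  by (simp add: ipz_def sum_negf)

lemma ip_add: "ip w (a + b) = ip w a + ip w b"
  by (simp add: ip_def algebra_simps sum.distrib)

lemma ip_neg: "ip w (- a) = - ip w a"
  by (simp add: ip_def sum_negf)

lemma ip_om: "Q > 0 \<Longrightarrow> ip (om Q P) k = real_of_int (ipz P k) / real_of_int Q"
  by (simp add: ip_def om_def ipz_def sum_divide_distrib)

lemma per_tau: "per Q P x \<Longrightarrow> per Q P (tau k l x)"
  unfolding per_def tau_def
  by (metis (no_types, lifting) add.commute add.left_commute)

lemma per_min: "per Q P x \<Longrightarrow> per Q P z \<Longrightarrow> per Q P (\<lambda>i. min (x i) (z i))"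
  unfolding per_def by (simp add: min_add_distrib_left)

lemma per_max: "per Q P x \<Longrightarrow> per Q P z \<Longrightarrow> per Q P (\<lambda>i. max (x i) (z i))"
  unfolding per_def by (simp add: max_add_distrib_left)

lemma per_shift: "per Q P x \<Longrightarrow> per Q P (\<lambda>i. x i + c)"
  unfolding per_def by simp

lemma per_lim:
  assumes "\<forall>N. per Q P (g N)" "\<forall>i. (\<lambda>N. g N i) \<longlonglongrightarrow> z i"
  shows "per Q P z"
  unfolding per_def
proof (intro allI)
  fix i v
  have "(\<lambda>N. g N (i + Q *s v)) \<longlonglongrightarrow> z i + real_of_int (ipz P v)"
    using assms(1) tendsto_add[OF assms(2)[rule_format, of i] tendsto_const]
    by (simp add: per_def)
  moreover have "(\<lambda>N. g N (i + Q *s v)) \<longlonglongrightarrow> z (i + Q *s v)" using assms(2) by blast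
  ultimately show "z (i + Q *s v) = z i + real_of_int (ipz P v)" using LIMSEQ_unique by blast
qed

context LS begin

definition W :: "int \<Rightarrow> (int^'d \<Rightarrow> real) \<Rightarrow> real" where
  "W Q x = (\<Sum>j\<in>pbox Q. S j x)"

definition pmin :: "int \<Rightarrow> int^'d \<Rightarrow> (int^'d \<Rightarrow> real) \<Rightarrow> bool" where
  "pmin Q P x \<longleftrightarrow> per Q P x \<and> (\<forall>z. per Q P z \<longrightarrow> W Q x \<le> W Q z)"

lemma per_S: "per Q P x \<Longrightarrow> S (j + Q *s v) x = S j x"
proof -
  assume p: "per Q P x"
  have "tau (Q *s v) (- ipz P v) x = x" using p by (simp add: tau_def per_def fun_eq_iff)
  thus ?thesis using B[of j "Q *s v" "- ipz P v" x] by simp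
qed

lemma per_S_mod: "per Q P x \<Longrightarrow> S j x = S (vmod Q j) x"
  using per_S[of Q P x "vmod Q j" "vdiv Q j"] vmod_vdiv[of j Q] by simp

lemma W_reindex:
  assumes Q: "Q > 0" and p: "per Q P x"
  shows "(\<Sum>j\<in>pbox Q. S (j + c) x) = W Q x"
  unfolding W_def
proof (rule sum.reindex_bij_witness[of _ "\<lambda>b. vmod Q (b - c)" "\<lambda>a. vmod Q (a + c)"])
  fix a :: "int^'d" assume a: "a \<in> pbox Q"
  show "vmod Q (vmod Q (a + c) - c) = a" using a
    by (simp add: vec_eq_iff vmod_def pbox_def mod_diff_left_eq)
  show "vmod Q (a + c) \<in> pbox Q" using Q by (rule vmod_box)
  show "S (vmod Q (a + c)) x = S (a + c) x" using per_S_mod[OF p] by simp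
next
  fix b :: "int^'d" assume b: "b \<in> pbox Q"
  show "vmod Q (vmod Q (b - c) + c) = b" using b
    by (simp add: vec_eq_iff vmod_def pbox_def mod_add_left_eq)
  show "vmod Q (b - c) \<in> pbox Q" using Q by (rule vmod_box)
qed

lemma W_tau: "Q > 0 \<Longrightarrow> per Q P x \<Longrightarrow> W Q (tau k l x) = W Q x"
  unfolding W_def using W_reindex[of Q P x k] by (simp add: B W_def)

lemma W_shift: "W Q (\<lambda>i. x i + real_of_int l) = W Q x"
  unfolding W_def by (simp add: S_shift)

lemma W_submod: "W Q (\<lambda>i. min (x i) (z i)) + W Q (\<lambda>i. max (x i) (z i)) \<le> W Q x + W Q z"
  unfolding W_def sum.distrib[symmetric] by (intro sum_mono submod)

lemma W_cont: "continuous_on UNIV (W Q)"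
  unfolding W_def by (intro continuous_on_sum S_cont)

lemma W_tendsto: "(\<forall>i. (\<lambda>N. g N i) \<longlonglongrightarrow> z i) \<Longrightarrow> (\<lambda>N. W Q (g N)) \<longlonglongrightarrow> W Q z"
proof -
  assume "\<forall>i. (\<lambda>N. g N i) \<longlonglongrightarrow> z i"
  hence "g \<longlonglongrightarrow> z" using tendsto_fun_iff[of g z sequentially] by blast
  thus ?thesis by (intro continuous_on_tendsto_compose[OF W_cont]) auto
qed

lemma pmin_min: "pmin Q P x \<Longrightarrow> pmin Q P z \<Longrightarrow> pmin Q P (\<lambda>i. min (x i) (z i))"
proof -
  assume a: "pmin Q P x" "pmin Q P z"
  have px: "per Q P x" "per Q P z" using a by (auto simp: pmin_def)
  have pm: "per Q P (\<lambda>i. max (x i) (z i))" using px by (rule per_max)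
  have "W Q z \<le> W Q (\<lambda>i. max (x i) (z i))" using a pm by (auto simp: pmin_def)
  moreover have "W Q x \<le> W Q (\<lambda>i. min (x i) (z i))" "W Q z \<le> W Q x"
    using a px per_min[OF px] by (auto simp: pmin_def)
  ultimately have "W Q (\<lambda>i. min (x i) (z i)) \<le> W Q x" using W_submod[of Q x z] by linarith
  thus ?thesis using a per_min[OF px] by (auto simp: pmin_def)
qed

lemma pmin_lim:
  assumes "\<forall>N. pmin Q P (g N)" "\<forall>i. (\<lambda>N. g N i) \<longlonglongrightarrow> z i"
  shows "pmin Q P z"
proof -
  have p: "per Q P z" using per_lim[of Q P g z] assms by (auto simp: pmin_def)
  have "W Q z \<le> W Q w" if "per Q P w" for w
    using W_tendsto[OF assms(2)] assms(1) that
    by (intro LIMSEQ_le_const2[of "\<lambda>N. W Q (g N)"]) (auto simp: pmin_def)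
  thus ?thesis using p by (simp add: pmin_def)
qed

end

lemma inf_trick:
  fixes x :: "int^'d::finite \<Rightarrow> real" and H :: "((int^'d) \<times> int) set"
  assumes H0: "(0,0) \<in> H"
    and Hadd: "\<And>g h. g \<in> H \<Longrightarrow> h \<in> H \<Longrightarrow> (fst g + fst h, snd g + snd h) \<in> H"
    and Gt: "\<And>h. h \<in> H \<Longrightarrow> G (tau (fst h) (snd h) x)"
    and Gmin: "\<And>a b. G a \<Longrightarrow> G b \<Longrightarrow> G (\<lambda>i. min (a i) (b i))"
    and Glim: "\<And>g z. (\<forall>N. G (g N)) \<Longrightarrow> (\<forall>i. (\<lambda>N. g N i) \<longlonglongrightarrow> z i) \<Longrightarrow> Qp z"
    and bnd: "\<And>h i. h \<in> H \<Longrightarrow> x i - C \<le> tau (fst h) (snd h) x i"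
  shows "\<exists>z. Qp z \<and> (\<forall>h\<in>H. z \<le> tau (fst h) (snd h) z) \<and> (\<forall>i. x i - C \<le> z i \<and> z i \<le> x i)"
proof -
  define e where "e = from_nat_into H"
  have cH: "countable H" by (rule countable_subset[of _ UNIV]) auto
  have He: "range e = H" unfolding e_def using H0 cH by (intro range_from_nat_into) auto
  define T where "T n = tau (fst (e n)) (snd (e n)) x" for n
  define g where "g = rec_nat (T 0) (\<lambda>n gn. \<lambda>i. min (gn i) (T (Suc n) i))"
  have g0: "g 0 = T 0" and gS: "g (Suc n) = (\<lambda>i. min (g n i) (T (Suc n) i))" for n
    by (simp_all add: g_def)
  have eH: "e n \<in> H" for n using He by blast
  have GT: "G (T n)" for n unfolding T_def using eH by (rule Gt)
  have Gg: "G (g n)" for n by (induction n) (simp_all add: g0 gS GT Gmin)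
  have g_le: "j \<le> n \<Longrightarrow> g n i \<le> T j i" for j n i
  proof (induction n)
    case 0 thus ?case by (simp add: g0)
  next
    case (Suc n) thus ?case by (cases "j = Suc n") (auto simp: gS)
  qed
  have g_att: "\<exists>j\<le>n. g n i = T j i" for n i
  proof (induction n)
    case 0 thus ?case by (simp add: g0)
  next
    case (Suc n)
    then obtain j where "j \<le> n" "g n i = T j i" by blast
    thus ?case unfolding gS by (cases "T j i \<le> T (Suc n) i") (auto simp: min_def intro: le_SucI)
  qed
  have g_lb: "x i - C \<le> g n i" for n i
    using g_att[of n i] bnd[OF eH] unfolding T_def by force
  have dec: "decseq (\<lambda>n. g n i)" for i by (intro decseq_SucI) (simp add: gS)
  have "\<forall>i. \<exists>L. (\<lambda>n. g n i) \<longlonglongrightarrow> L \<and> (\<forall>n. L \<le> g n i)"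
    using dec g_lb by (metis decseq_convergent)
  then obtain z where z: "\<And>i. (\<lambda>n. g n i) \<longlonglongrightarrow> z i" "\<And>i n. z i \<le> g n i"
    by metis
  have Qz: "Qp z" using Glim[of g z] Gg z(1) by blast
  have zT: "z i \<le> T j i" for i j using z(2)[of i j] g_le[of j j i] by simp
  have zlb: "x i - C \<le> z i" for i
    using z(1)[of i] g_lb by (intro LIMSEQ_le_const[of "\<lambda>n. g n i"]) auto
  obtain j0 where j0: "e j0 = (0,0)" using He H0 by (metis rangeE)
  have zub: "z i \<le> x i" for i using zT[of i j0] by (simp add: T_def j0 tau_0)
  have zord: "z \<le> tau (fst h) (snd h) z" if h: "h \<in> H" for h
  proof (rule le_funI)
    fix i
    obtain k l where hkl: "h = (k, l)" by fastforce
    have "z i \<le> g n (i + k) + real_of_int l" for n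
    proof -
      obtain j where "j \<le> n" "g n (i + k) = T j (i + k)" using g_att by blast
      hence "g n (i + k) + real_of_int l = tau k l (T j) i" by (simp add: tau_def)
      also have "\<dots> = tau (k + fst (e j)) (l + snd (e j)) x i" by (simp add: T_def tau_tau)
      also obtain j' where "e j' = (k + fst (e j), l + snd (e j))"
        using Hadd[OF h eH[of j]] He hkl by (metis fst_conv rangeE snd_conv)
      hence "tau (k + fst (e j)) (l + snd (e j)) x i = T j' i" by (simp add: T_def)
      finally show ?thesis using zT[of i j'] by simp
    qed
    moreover have "(\<lambda>n. g n (i + k) + real_of_int l) \<longlonglongrightarrow> z (i + k) + real_of_int l"
      using z(1) by (intro tendsto_add) auto
    ultimately have "z i \<le> z (i + k) + real_of_int l"
      by (intro LIMSEQ_le_const[of "\<lambda>n. g n (i + k) + real_of_int l"]) auto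
    thus "z i \<le> tau (fst h) (snd h) z i" by (simp add: hkl tau_def)
  qed
  show ?thesis using Qz zord zlb zub by blast
qed

context LS begin

lemma xref_per: "Q > 0 \<Longrightarrow> per Q P (\<lambda>i. real_of_int (ipz P i) / real_of_int Q)"
  unfolding per_def
proof (intro allI)
  fix i v assume Q: "Q > 0"
  have "ipz P (Q *s v) = Q * ipz P v" by (simp add: ipz_def sum_distrib_left algebra_simps)
  hence "ipz P (i + Q *s v) = ipz P i + Q * ipz P v" by (simp add: ipz_add)
  thus "real_of_int (ipz P (i + Q *s v)) / real_of_int Q =
        real_of_int (ipz P i) / real_of_int Q + real_of_int (ipz P v)"
    using Q by (simp add: field_simps)
qed

lemma compact_PiE_Icc: "compact (PiE UNIV (\<lambda>i. {- b i .. (b i::real)}))"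
proof -
  have "compactin (product_topology (\<lambda>i. euclidean) UNIV) (PiE UNIV (\<lambda>i. {- b i .. (b i::real)}))"
    by (simp add: compactin_PiE)
  thus ?thesis by (simp add: euclidean_product_topology compactin_euclidean_iff)
qed

lemma closed_per: "closed {x. per Q P x}"
  unfolding per_def
  by (intro closed_Collect_all closed_Collect_eq continuous_intros continuous_on_product_coordinates)

lemma pmin_exists:
  assumes Q: "Q > 0"
  shows "\<exists>x. pmin Q P x"
proof -
  define xref where "xref = (\<lambda>i. real_of_int (ipz P i) / real_of_int Q)"
  have pref: "per Q P xref" using xref_per[OF Q] by (simp add: xref_def)
  obtain m0 where m0: "\<And>j x. m0 \<le> S j x" using S_lower by blast
  define c0 where "c0 = W Q xref - (real (card (pbox Q :: (int^'d) set)) - 1) * m0"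
  obtain R where R: "\<And>j k x. norm1 (k - j) = 1 \<Longrightarrow> S j x \<le> c0 \<Longrightarrow> \<bar>x k - x j\<bar> \<le> R"
    using coerc_bound[of c0] by blast
  define K where "K = {x. per Q P x \<and> 0 \<le> x 0 \<and> x 0 \<le> 1 \<and> W Q x \<le> W Q xref}"
  define b where "b (i::int^'d) = 1 + \<bar>R\<bar> * real_of_int (norm1 i)" for i
  have cardb: "1 \<le> card (pbox Q :: (int^'d) set)"
    using vmod_box[OF Q, of 0] box_finite[of Q] by (metis card_0_eq empty_iff less_one not_le)
  have Sle: "S j x \<le> c0" if x: "x \<in> K" for j x
  proof -
    have p: "per Q P x" using x by (simp add: K_def)
    let ?a = "vmod Q j"
    have a: "?a \<in> pbox Q" using vmod_box[OF Q] .
    have w1: "W Q x = S ?a x + (\<Sum>j\<in>pbox Q - {?a}. S j x)"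
      unfolding W_def by (rule sum.remove[OF box_finite a])
    have w2: "real (card (pbox Q - {?a})) * m0 \<le> (\<Sum>j\<in>pbox Q - {?a}. S j x)"
      using m0 by (intro sum_bounded_below) auto
    have w3: "real (card (pbox Q - {?a})) = real (card (pbox Q :: (int^'d) set)) - 1"
    proof -
      have "card (pbox Q - {?a}) = card (pbox Q :: (int^'d) set) - 1" using a box_finite by (simp add: card_Diff_singleton)
      thus ?thesis using of_nat_diff[OF cardb] by simp
    qed
    have w4: "W Q x \<le> W Q xref" using x by (simp add: K_def)
    have w2': "(real (card (pbox Q :: (int^'d) set)) - 1) * m0 \<le> (\<Sum>j\<in>pbox Q - {?a}. S j x)"
      using w2 unfolding w3 .
    have "S ?a x \<le> c0" unfolding c0_def using w1 w2' w4 by linarith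
    thus ?thesis using per_S_mod[OF p] by simp
  qed
  have Kb: "K \<subseteq> PiE UNIV (\<lambda>i. {- b i .. b i})"
  proof
    fix x assume x: "x \<in> K"
    have "\<forall>j k. norm1 (k - j) = 1 \<longrightarrow> \<bar>x k - x j\<bar> \<le> R" using R Sle[OF x] by blast
    hence pb: "\<bar>x i - x 0\<bar> \<le> R * real_of_int (norm1 (i - 0))" for i by (rule path_bound)
    have "\<bar>x i\<bar> \<le> b i" for i
    proof -
      have "R * real_of_int (norm1 i) \<le> \<bar>R\<bar> * real_of_int (norm1 i)"
        using norm1_nonneg[of i] by (intro mult_right_mono) auto
      moreover have "0 \<le> x 0" "x 0 \<le> 1" using x by (auto simp: K_def)
      ultimately show ?thesis using pb[of i] unfolding b_def by (simp add: abs_le_iff)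
    qed
    hence "- b i \<le> x i \<and> x i \<le> b i" for i by (metis abs_le_iff minus_le_iff)
    thus "x \<in> PiE UNIV (\<lambda>i. {- b i .. b i})" by auto
  qed
  have cK: "closed K"
    unfolding K_def
    by (intro closed_Collect_conj closed_per[unfolded mem_Collect_eq] closed_Collect_le
        continuous_intros continuous_on_product_coordinates W_cont)
  have kK: "compact K"
  proof -
    have "compact (PiE UNIV (\<lambda>i. {- b i .. b i}) \<inter> K)"
      by (intro compact_Int_closed compact_PiE_Icc cK)
    thus ?thesis using Kb by (simp add: Int_absorb1)
  qed
  have refK: "xref \<in> K" using pref by (simp add: K_def xref_def ipz_def)
  obtain x where xK: "x \<in> K" and xm: "\<And>y. y \<in> K \<Longrightarrow> W Q x \<le> W Q y"
    using continuous_attains_inf[OF kK _ continuous_on_subset[OF W_cont]] refK by blast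
  have "W Q x \<le> W Q z" if pz: "per Q P z" for z
  proof -
    define z' where "z' = (\<lambda>i. z i + real_of_int (- \<lfloor>z 0\<rfloor>))"
    have pz': "per Q P z'" unfolding z'_def using pz by (rule per_shift)
    have Wz: "W Q z' = W Q z" unfolding z'_def by (rule W_shift)
    have z0: "0 \<le> z' 0" "z' 0 \<le> 1" unfolding z'_def by linarith+
    show ?thesis
    proof (cases "W Q z' \<le> W Q xref")
      case True
      hence "z' \<in> K" using pz' z0 by (simp add: K_def)
      thus ?thesis using xm Wz by fastforce
    next
      case False
      thus ?thesis using xm[OF refK] Wz by linarith
    qed
  qed
  thus ?thesis using xK by (auto simp: pmin_def K_def)
qed

end

definition ordR :: "real^'d::finite \<Rightarrow> (int^'d \<Rightarrow> real) \<Rightarrow> bool" where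
  "ordR w x \<longleftrightarrow> (\<forall>k l. 0 \<le> ip w k + real_of_int l \<longrightarrow> x \<le> tau k l x)"

lemma ip_smult: "ip w (of_int c *s k) = real_of_int c * ip w k"
  by (simp add: ip_def sum_distrib_left algebra_simps)

lemma ip_zero: "ip w 0 = 0" by (simp add: ip_def)

lemma ordR_rev:
  assumes o: "ordR w x" and h: "ip w k + real_of_int l \<le> 0"
  shows "tau k l x \<le> x"
proof (rule le_funI)
  fix i
  have "0 \<le> ip w (- k) + real_of_int (- l)" using h by (simp add: ip_neg)
  hence "x (i + k) \<le> tau (- k) (- l) x (i + k)" using o unfolding ordR_def le_fun_def by blast
  thus "tau k l x i \<le> x i" by (simp add: tau_def)
qed

lemma ordR_est:
  assumes o: "ordR w x"
  shows "\<bar>x (i + k) - x i - ip w k\<bar> \<le> 1"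
proof -
  define l1 where "l1 = \<lceil>- ip w k\<rceil>"
  define l2 where "l2 = \<lfloor>- ip w k\<rfloor>"
  have "0 \<le> ip w k + real_of_int l1" unfolding l1_def by linarith
  hence "x i \<le> tau k l1 x i" using o unfolding ordR_def le_fun_def by blast
  hence a: "x i \<le> x (i + k) + real_of_int l1" by (simp add: tau_def)
  have "ip w k + real_of_int l2 \<le> 0" unfolding l2_def by linarith
  hence "tau k l2 x i \<le> x i" using ordR_rev[OF o] unfolding le_fun_def by blast
  hence b: "x (i + k) + real_of_int l2 \<le> x i" by (simp add: tau_def)
  have "real_of_int l1 < - ip w k + 1" "- ip w k - 1 < real_of_int l2" unfolding l1_def l2_def by linarith+
  thus ?thesis using a b by (simp add: abs_le_iff)
qed

lemma ordR_Bbar: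
  assumes o: "ordR w x"
  shows "x \<in> Bbar w"
proof -
  have bk: "birkhoff x"
    unfolding birkhoff_def
  proof (intro allI)
    fix k l
    show "x \<le> tau k l x \<or> tau k l x \<le> x"
    proof (cases "0 \<le> ip w k + real_of_int l")
      case True thus ?thesis using o unfolding ordR_def by blast
    next
      case False thus ?thesis using ordR_rev[OF o, of k l] by simp
    qed
  qed
  have rv: "has_rotation_vector x w"
    unfolding has_rotation_vector_def
  proof (intro allI)
    fix i
    have e: "\<bar>x (of_nat n *s i) - x 0 - real n * ip w i\<bar> \<le> 1" for n
      using ordR_est[OF o, of 0 "of_nat n *s i"] ip_smult[of w "int n" i] by simp
    have "(\<lambda>n. (x (of_nat n *s i) - real n * ip w i) / real n) \<longlonglongrightarrow> 0"
    proof (rule Lim_null_comparison[of _ "\<lambda>n. (1 + \<bar>x 0\<bar>) / real n"])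
      show "\<forall>\<^sub>F n in sequentially. norm ((x (of_nat n *s i) - real n * ip w i) / real n) \<le> (1 + \<bar>x 0\<bar>) / real n"
      proof (intro always_eventually allI)
        fix n
        have "\<bar>x (of_nat n *s i) - real n * ip w i\<bar> \<le> 1 + \<bar>x 0\<bar>" using e[of n] by linarith
        thus "norm ((x (of_nat n *s i) - real n * ip w i) / real n) \<le> (1 + \<bar>x 0\<bar>) / real n"
          by (simp add: divide_right_mono)
      qed
      show "(\<lambda>n. (1 + \<bar>x 0\<bar>) / real n) \<longlonglongrightarrow> 0" by (rule lim_const_over_n)
    qed
    hence "(\<lambda>n. (x (of_nat n *s i) - real n * ip w i) / real n + ip w i) \<longlonglongrightarrow> 0 + ip w i"
      by (intro tendsto_add) auto
    moreover have "\<forall>\<^sub>F n in sequentially. (x (of_nat n *s i) - real n * ip w i) / real n + ip w i = x (of_nat n *s i) / real n"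
      using eventually_gt_at_top[of 0] by eventually_elim (simp add: field_simps)
    ultimately show "(\<lambda>n. x (of_nat n *s i) / real n) \<longlonglongrightarrow> ip w i"
      by (simp add: tendsto_cong[symmetric])
  qed
  have inv: "tau k l x = x" if "ip w k + real_of_int l = 0" for k l
    using that o ordR_rev[OF o, of k l] unfolding ordR_def by (simp add: order_antisym)
  show ?thesis using bk rv inv by (simp add: Bbar_def)
qed

lemma ordR_shift: "ordR w x \<Longrightarrow> ordR w (\<lambda>i. x i + c)"
  unfolding ordR_def le_fun_def tau_def by simp

context LS begin

lemma per_stage:
  assumes Q: "Q > 0"
  shows "\<exists>x. pmin Q P x \<and> ordR (om Q P) x \<and> 0 \<le> x 0 \<and> x 0 \<le> 1"
proof -
  obtain x0 where x0: "pmin Q P x0" using pmin_exists[OF Q] by blast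
  have p0: "per Q P x0" using x0 by (simp add: pmin_def)
  define w where "w = om Q P"
  define u where "u i = x0 i - ip w i" for i
  have ipQ: "ip w (Q *s v) = real_of_int (ipz P v)" for v
  proof -
    have "ipz P (Q *s v) = Q * ipz P v" by (simp add: ipz_def sum_distrib_left algebra_simps)
    thus ?thesis using Q by (simp add: w_def ip_om)
  qed
  have uper: "u (i + Q *s v) = u i" for i v
    using p0 ipQ unfolding u_def per_def by (simp add: ip_add)
  define M where "M = Max ((\<lambda>i. \<bar>u i\<bar>) ` pbox Q)"
  have uM: "\<bar>u i\<bar> \<le> M" for i
  proof -
    have "u i = u (vmod Q i)" using uper[of "vmod Q i" "vdiv Q i"] vmod_vdiv[of i Q] by simp
    moreover have "\<bar>u (vmod Q i)\<bar> \<le> M" unfolding M_def using vmod_box[OF Q] box_finite by (intro Max_ge) auto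
    ultimately show ?thesis by simp
  qed
  define H where "H = {h :: (int^'d) \<times> int. 0 \<le> ip w (fst h) + real_of_int (snd h)}"
  have "\<exists>z. pmin Q P z \<and> (\<forall>h\<in>H. z \<le> tau (fst h) (snd h) z) \<and> (\<forall>i. x0 i - 2 * M \<le> z i \<and> z i \<le> x0 i)"
  proof (rule inf_trick[where G = "pmin Q P"])
    show "(0, 0) \<in> H" by (simp add: H_def ip_zero)
    show "(fst g + fst h, snd g + snd h) \<in> H" if "g \<in> H" "h \<in> H" for g h
      using that by (simp add: H_def ip_add)
    show "pmin Q P (tau (fst h) (snd h) x0)" for h
      using x0 p0 per_tau[OF p0] W_tau[OF Q p0] by (simp add: pmin_def)
    show "pmin Q P (\<lambda>i. min (a i) (b i))" if "pmin Q P a" "pmin Q P b" for a b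
      using that by (rule pmin_min)
    show "pmin Q P z" if "\<forall>N. pmin Q P (g N)" "\<forall>i. (\<lambda>N. g N i) \<longlonglongrightarrow> z i" for g z
      using that by (rule pmin_lim)
    show "x0 i - 2 * M \<le> tau (fst h) (snd h) x0 i" if "h \<in> H" for h i
    proof -
      have "0 \<le> ip w (fst h) + real_of_int (snd h)" using that by (simp add: H_def)
      moreover have "x0 (i + fst h) = u (i + fst h) + ip w i + ip w (fst h)" by (simp add: u_def ip_add)
      moreover have "x0 i = u i + ip w i" by (simp add: u_def)
      ultimately show ?thesis using uM[of i] uM[of "i + fst h"] by (simp add: tau_def abs_le_iff)
    qed
  qed
  then obtain z where z: "pmin Q P z" "\<forall>h\<in>H. z \<le> tau (fst h) (snd h) z" by blast
  have oz: "ordR w z" unfolding ordR_def using z(2) by (auto simp: H_def)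
  define z' where "z' = (\<lambda>i. z i + real_of_int (- \<lfloor>z 0\<rfloor>))"
  have "pmin Q P z'"
    using z(1) per_shift W_shift unfolding z'_def pmin_def by metis
  moreover have "ordR w z'" unfolding z'_def using oz by (rule ordR_shift)
  moreover have "0 \<le> z' 0" "z' 0 \<le> 1" unfolding z'_def by linarith+
  ultimately show ?thesis unfolding w_def by blast
qed

end

lemma mod_neg_small: "- Q \<le> t \<Longrightarrow> t < 0 \<Longrightarrow> (t::int) mod Q = t + Q"
proof -
  assume a: "- Q \<le> t" "t < 0"
  have "(t + Q) mod Q = t + Q" using a by (intro mod_pos_pos_trivial) auto
  thus ?thesis by simp
qed

lemma mod_big_small: "Q \<le> t \<Longrightarrow> t < 2 * Q \<Longrightarrow> (t::int) mod Q = t - Q"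
proof -
  assume a: "Q \<le> t" "t < 2 * Q"
  have "(t - Q) mod Q = t - Q" using a by (intro mod_pos_pos_trivial) auto
  thus ?thesis by simp
qed

context LS begin

definition NA :: "(int^'d) set \<Rightarrow> (int^'d) set" where
  "NA A = {j. \<exists>a\<in>A. real_of_int (norm1 (a - j)) \<le> r}"

definition D :: "(int^'d \<Rightarrow> real) \<Rightarrow> (int^'d) set \<Rightarrow> (int^'d \<Rightarrow> real) \<Rightarrow> real" where
  "D x A y = (\<Sum>j\<in>NA A. S j (\<lambda>i. x i + y i) - S j x)"

definition gmD :: "(int^'d \<Rightarrow> real) \<Rightarrow> bool" where
  "gmD x \<longleftrightarrow> (\<forall>A y. finite A \<longrightarrow> (\<forall>i. i \<notin> A \<longrightarrow> y i = 0) \<longrightarrow> 0 \<le> D x A y)"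

lemma NA_eq: "NA A = (\<Union>a\<in>A. lball a r)"
  unfolding NA_def lball_def by (auto simp: norm1_minus_commute)

lemma NA_finite: "finite A \<Longrightarrow> finite (NA A)"
  unfolding NA_eq by (intro finite_UN_I lball_finite)

lemma loc_zero:
  fixes A :: "(int^'d) set"
  assumes "j \<notin> NA A" "\<forall>i. i \<notin> A \<longrightarrow> y i = 0"
  shows "S j (\<lambda>i. x i + y i) = S j x"
proof (rule A_local, intro ballI)
  fix k assume "k \<in> lball j r"
  hence "k \<notin> A" using assms(1) unfolding NA_eq lball_def by (auto simp: norm1_minus_commute)
  thus "x k + y k = x k" using assms(2) by simp
qed

lemma gm_of_gmD:
  assumes g: "gmD x"
  shows "global_minimizer S r x"
  unfolding global_minimizer_def
proof (intro allI impI)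
  fix B :: "(int^'d) set" and y :: "int^'d \<Rightarrow> real" assume B: "finite B" and y: "\<forall>i. i \<notin> interior_r B r \<longrightarrow> y i = 0"
  define A where "A = interior_r B r"
  have fA: "finite A" using B by (rule finite_subset[rotated]) (auto simp: A_def interior_r_def)
  have yA: "\<forall>i. i \<notin> A \<longrightarrow> y i = 0" using y by (simp add: A_def)
  have sub: "NA A \<subseteq> B"
  proof
    fix j assume "j \<in> NA A"
    then obtain a where a: "a \<in> A" "real_of_int (norm1 (a - j)) \<le> r" by (auto simp: NA_def)
    hence "j \<in> lball a r" by (simp add: lball_def norm1_minus_commute)
    thus "j \<in> B" using a(1) by (auto simp: A_def interior_r_def)
  qed
  have "WB S B (\<lambda>i. x i + y i) - WB S B x = (\<Sum>j\<in>B. S j (\<lambda>i. x i + y i) - S j x)"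
    by (simp add: WB_def sum_subtractf)
  moreover have "\<dots> = D x A y"
    unfolding D_def using loc_zero[OF _ yA] by (intro sum.mono_neutral_right[OF B sub]) auto
  moreover have "0 \<le> D x A y" using g fA yA unfolding gmD_def by blast
  ultimately show "WB S B x \<le> WB S B (\<lambda>i. x i + y i)" by linarith
qed

lemma D_tau:
  fixes A :: "(int^'d) set" and y :: "int^'d \<Rightarrow> real"
  shows "D (tau k l x) A y = D x ((\<lambda>a. a + k) ` A) (\<lambda>i. y (i - k))"
proof -
  have e1: "(\<lambda>i. tau k l x i + y i) = tau k l (\<lambda>i. x i + y (i - k))"
    by (simp add: tau_def fun_eq_iff)
  have e2: "NA ((\<lambda>a. a + k) ` A) = (\<lambda>j. j + k) ` NA A"
  proof (intro equalityI subsetI)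
    fix j assume "j \<in> NA ((\<lambda>a. a + k) ` A)"
    then obtain a where "a \<in> A" "real_of_int (norm1 (a + k - j)) \<le> r" by (auto simp: NA_def)
    moreover have e: "a - (j - k) = a + k - j" by simp
    ultimately have n: "a \<in> A" "real_of_int (norm1 (a - (j - k))) \<le> r" by (simp_all only: e)
    hence "j - k \<in> NA A" unfolding NA_def by blast
    thus "j \<in> (\<lambda>j. j + k) ` NA A" by (intro image_eqI[of _ _ "j - k"]) auto
  next
    fix j assume "j \<in> (\<lambda>j. j + k) ` NA A"
    then obtain j0 a where ja: "j = j0 + k" "a \<in> A" "real_of_int (norm1 (a - j0)) \<le> r" by (auto simp: NA_def)
    have "(a + k) - j = a - j0" using ja by simp
    hence "a + k \<in> (\<lambda>a. a + k) ` A" "real_of_int (norm1 ((a + k) - j)) \<le> r" using ja by auto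
    thus "j \<in> NA ((\<lambda>a. a + k) ` A)" unfolding NA_def by blast
  qed
  have "D (tau k l x) A y = (\<Sum>j\<in>NA A. S (j + k) (\<lambda>i. x i + y (i - k)) - S (j + k) x)"
    unfolding D_def e1 B by (rule refl)
  also have "\<dots> = (\<Sum>j\<in>(\<lambda>j. j + k) ` NA A. S j (\<lambda>i. x i + y (i - k)) - S j x)"
    by (rule sum.reindex[unfolded comp_def, symmetric]) (simp add: inj_on_def)
  also have "\<dots> = D x ((\<lambda>a. a + k) ` A) (\<lambda>i. y (i - k))"
    unfolding D_def e2 by (rule refl)
  finally show ?thesis .
qed

lemma gmD_tau: "gmD x \<Longrightarrow> gmD (tau k l x)"
  unfolding gmD_def
proof (intro allI impI)
  fix A :: "(int^'d) set" and y :: "int^'d \<Rightarrow> real" assume g: "\<forall>A y. finite A \<longrightarrow> (\<forall>i. i \<notin> A \<longrightarrow> y i = 0) \<longrightarrow> 0 \<le> D x A y"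
    and A: "finite A" and y: "\<forall>i. i \<notin> A \<longrightarrow> y i = 0"
  have yk: "\<forall>i. i \<notin> (\<lambda>a. a + k) ` A \<longrightarrow> y (i - k) = 0"
  proof (intro allI impI)
    fix i assume i: "i \<notin> (\<lambda>a. a + k) ` A"
    have "i - k \<notin> A"
    proof
      assume "i - k \<in> A"
      hence "(i - k) + k \<in> (\<lambda>a. a + k) ` A" by (rule imageI)
      thus False using i by simp
    qed
    thus "y (i - k) = 0" using y by blast
  qed
  have fk: "finite ((\<lambda>a. a + k) ` A)" using A by (rule finite_imageI)
  have "0 \<le> D x ((\<lambda>a. a + k) ` A) (\<lambda>i. y (i - k))"
    using g[THEN spec[of _ "(\<lambda>a. a + k) ` A"], THEN spec[of _ "\<lambda>i. y (i - k)"]] fk yk by blast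
  thus "0 \<le> D (tau k l x) A y" by (simp only: D_tau)
qed

lemma D_tendsto:
  assumes "\<forall>i. (\<lambda>n. z n i) \<longlonglongrightarrow> x i"
  shows "(\<lambda>n. D (z n) A y) \<longlonglongrightarrow> D x A y"
proof -
  have z: "z \<longlonglongrightarrow> x" by (rule iffD2[OF tendsto_fun_iff]) (rule assms)
  have h: "\<forall>i. (\<lambda>n. z n i + y i) \<longlonglongrightarrow> x i + y i"
    using assms by (intro allI tendsto_add tendsto_const) blast
  have zy: "(\<lambda>n. \<lambda>i. z n i + y i) \<longlonglongrightarrow> (\<lambda>i. x i + y i)"
    by (rule iffD2[OF tendsto_fun_iff]) (rule h)
  have c1: "(\<lambda>n. S j (\<lambda>i. z n i + y i)) \<longlonglongrightarrow> S j (\<lambda>i. x i + y i)" for j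
    by (rule continuous_on_tendsto_compose[OF S_cont zy]) simp_all
  have c2: "(\<lambda>n. S j (z n)) \<longlonglongrightarrow> S j x" for j
    by (rule continuous_on_tendsto_compose[OF S_cont z]) simp_all
  show ?thesis unfolding D_def by (intro tendsto_sum tendsto_diff c1 c2)
qed

lemma gmD_lim:
  assumes "\<forall>i. (\<lambda>n. z n i) \<longlonglongrightarrow> x i"
    and "\<And>A y. finite A \<Longrightarrow> (\<forall>i. i \<notin> A \<longrightarrow> y i = 0) \<Longrightarrow> eventually (\<lambda>n. 0 \<le> D (z n) A y) sequentially"
  shows "gmD x"
  unfolding gmD_def
proof (intro allI impI)
  fix A :: "(int^'d) set" and y :: "int^'d \<Rightarrow> real" assume "finite A" "\<forall>i. i \<notin> A \<longrightarrow> y i = 0"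
  hence ev: "eventually (\<lambda>n. 0 \<le> D (z n) A y) sequentially" by (rule assms(2))
  show "0 \<le> D x A y"
    by (rule tendsto_lowerbound[OF D_tendsto[OF assms(1)] ev trivial_limit_sequentially])
qed

end

lemma comp_le_r: "real_of_int (norm1 v) \<le> r \<Longrightarrow> \<bar>real_of_int (v$m)\<bar> \<le> r"
  using comp_le_norm1[of v m] by (metis of_int_abs of_int_le_iff order_trans)

context LS begin

lemma window:
  assumes Q: "Q > 0" and Qr: "2 * r < real_of_int Q" and pm: "pmin Q P x"
    and fA: "finite A" and y: "\<forall>i. i \<notin> A \<longrightarrow> y i = 0"
    and win: "\<forall>a\<in>A. \<forall>m. real_of_int (c$m) + r < real_of_int (a$m) \<and> real_of_int (a$m) + r < real_of_int (c$m) + real_of_int Q"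
  shows "0 \<le> D x A y"
proof -
  define yp where "yp i = y (c + vmod Q (i - c))" for i
  have p: "per Q P x" using pm by (simp add: pmin_def)
  have ypper: "yp (i + Q *s v) = yp i" for i v
  proof -
    have "i + Q *s v - c = (i - c) + Q *s v" by (simp add: algebra_simps)
    thus ?thesis unfolding yp_def by (simp only: vmod_add_mult)
  qed
  have p2: "per Q P (\<lambda>i. x i + yp i)" using p ypper unfolding per_def by simp
  have "W Q x \<le> W Q (\<lambda>i. x i + yp i)" using pm p2 by (simp add: pmin_def)
  hence "0 \<le> (\<Sum>j\<in>pbox Q. S (j + c) (\<lambda>i. x i + yp i)) - (\<Sum>j\<in>pbox Q. S (j + c) x)"
    using W_reindex[OF Q p, of c] W_reindex[OF Q p2, of c] by linarith
  hence "0 \<le> (\<Sum>j\<in>pbox Q. S (j + c) (\<lambda>i. x i + yp i) - S (j + c) x)"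
    by (simp add: sum_subtractf)
  also have "\<dots> = (\<Sum>j\<in>(\<lambda>j. j + c) ` pbox Q. S j (\<lambda>i. x i + yp i) - S j x)"
    by (rule sum.reindex[unfolded comp_def, symmetric]) (simp add: inj_on_def)
  finally have s1: "0 \<le> (\<Sum>j\<in>(\<lambda>j. j + c) ` pbox Q. S j (\<lambda>i. x i + yp i) - S j x)" .
  define C where "C = (\<lambda>j. j + c) ` pbox Q"
  have fC: "finite C" unfolding C_def using box_finite by (rule finite_imageI)
  have claim1: "yp k = y k" if j: "j \<in> C" and k: "k \<in> lball j r" for j k
  proof -
    obtain j0 where j0: "j0 \<in> pbox Q" "j = j0 + c" using j by (auto simp: C_def)
    have kj: "\<bar>real_of_int ((k - j)$m)\<bar> \<le> r" for m
      using k by (intro comp_le_r) (simp add: lball_def)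
    define t where "t = k - c"
    show ?thesis
    proof (cases "t \<in> pbox Q")
      case True
      hence "vmod Q (k - c) = k - c" using vmod_box_id by (simp add: t_def)
      thus ?thesis by (simp add: yp_def)
    next
      case False
      hence "\<exists>m. \<not> (0 \<le> t$m \<and> t$m < Q)" by (simp add: pbox_def)
      then obtain m where "\<not> (0 \<le> t$m \<and> t$m < Q)" by blast
      hence m: "t$m < 0 \<or> Q \<le> t$m" by linarith
      have tm: "real_of_int (t$m) = real_of_int (k$m) - real_of_int (c$m)" by (simp add: t_def)
      have j0m: "0 \<le> j0$m" "j0$m < Q" using j0(1) by (auto simp: pbox_def)
      have jm: "real_of_int (j$m) = real_of_int (j0$m) + real_of_int (c$m)" using j0(2) by simp
      have kjm: "\<bar>real_of_int (k$m) - real_of_int (j$m)\<bar> \<le> r" using kj[of m] by simp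
      have r0: "0 < r" by (rule A_r)
      have "k \<notin> A"
      proof
        assume "k \<in> A"
        hence "real_of_int (c$m) + r < real_of_int (k$m)" "real_of_int (k$m) + r < real_of_int (c$m) + real_of_int Q"
          using win by auto
        moreover have "real_of_int (t$m) < 0 \<or> real_of_int Q \<le> real_of_int (t$m)" using m by simp
        ultimately show False using tm r0 by linarith
      qed
      hence yk: "y k = 0" using y by blast
      define a where "a = c + vmod Q t"
      have "a \<notin> A"
      proof (cases "t$m < 0")
        case True
        have "- r \<le> real_of_int (t$m)" using tm jm kjm j0m by (simp add: abs_le_iff)
        hence "- Q \<le> t$m" using Qr r0 by (simp add: of_int_le_iff[symmetric]; linarith)
        hence "t$m mod Q = t$m + Q" using True by (intro mod_neg_small) auto
        hence "a$m = c$m + t$m + Q" by (simp add: a_def vmod_def)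
        hence ge: "real_of_int (a$m) + r \<ge> real_of_int (c$m) + real_of_int Q"
          using \<open>- r \<le> real_of_int (t$m)\<close> by (simp; linarith)
        show "a \<notin> A"
        proof
          assume "a \<in> A"
          hence "real_of_int (a$m) + r < real_of_int (c$m) + real_of_int Q" using win by blast
          thus False using ge by linarith
        qed
      next
        case False
        hence tQ: "Q \<le> t$m" using m by simp
        have "real_of_int (t$m) \<le> real_of_int (Q - 1) + r" using tm jm kjm j0m by (simp add: abs_le_iff; linarith)
        hence "t$m < 2 * Q" using Qr r0 by (simp add: of_int_less_iff[symmetric]; linarith)
        hence "t$m mod Q = t$m - Q" using tQ by (intro mod_big_small) auto
        hence "a$m = c$m + t$m - Q" by (simp add: a_def vmod_def)
        hence le: "real_of_int (a$m) \<le> real_of_int (c$m) + r"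
          using \<open>real_of_int (t$m) \<le> real_of_int (Q - 1) + r\<close> by (simp; linarith)
        show "a \<notin> A"
        proof
          assume "a \<in> A"
          hence "real_of_int (c$m) + r < real_of_int (a$m)" using win by blast
          thus False using le by linarith
        qed
      qed
      hence "yp k = 0" using y by (simp add: yp_def a_def t_def)
      thus ?thesis using yk by simp
    qed
  qed
  have claim2: "NA A \<subseteq> C"
  proof
    fix j assume "j \<in> NA A"
    then obtain a where a: "a \<in> A" "real_of_int (norm1 (a - j)) \<le> r" by (auto simp: NA_def)
    have "0 \<le> (j - c)$m \<and> (j - c)$m < Q" for m
    proof -
      have "\<bar>real_of_int ((a - j)$m)\<bar> \<le> r" using a(2) by (rule comp_le_r)
      hence h: "real_of_int (a$m) - real_of_int (j$m) \<le> r \<and> real_of_int (j$m) - real_of_int (a$m) \<le> r"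
        by (simp add: abs_le_iff)
      have w: "real_of_int (c$m) + r < real_of_int (a$m)" "real_of_int (a$m) + r < real_of_int (c$m) + real_of_int Q"
        using win a(1) by auto
      have "real_of_int (c$m) < real_of_int (j$m)" "real_of_int (j$m) < real_of_int (c$m) + real_of_int Q"
        using h w by linarith+
      thus ?thesis by simp
    qed
    hence "j - c \<in> pbox Q" by (simp add: pbox_def)
    moreover have "j = (j - c) + c" by simp
    ultimately show "j \<in> C" unfolding C_def by blast
  qed
  have "(\<Sum>j\<in>C. S j (\<lambda>i. x i + yp i) - S j x) = (\<Sum>j\<in>C. S j (\<lambda>i. x i + y i) - S j x)"
  proof (rule sum.cong[OF refl])
    fix j assume j: "j \<in> C"
    have "S j (\<lambda>i. x i + yp i) = S j (\<lambda>i. x i + y i)"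
      using claim1[OF j] by (intro A_local) auto
    thus "S j (\<lambda>i. x i + yp i) - S j x = S j (\<lambda>i. x i + y i) - S j x" by simp
  qed
  also have "\<dots> = D x A y"
    unfolding D_def using loc_zero[OF _ y] by (intro sum.mono_neutral_right[OF fC claim2]) auto
  finally show ?thesis using s1 unfolding C_def by simp
qed

end

context LS begin

lemma approx_stage:
  fixes w :: "real^'d"
  shows "\<exists>x. gmD x \<and> birkhoff x \<and> (\<forall>i k. \<bar>x (i + k) - x i - ip w k\<bar> \<le> 1)"
proof -
  define Qn :: "nat \<Rightarrow> int" where "Qn n = 2 * (int n + 1)" for n
  define Pn :: "nat \<Rightarrow> int^'d" where "Pn n = (\<chi> m. \<lfloor>real_of_int (Qn n) * w$m\<rfloor>)" for n
  define wn where "wn n = om (Qn n) (Pn n)" for n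
  have Qpos: "Qn n > 0" for n by (simp add: Qn_def)
  have "\<forall>n. \<exists>x. pmin (Qn n) (Pn n) x \<and> ordR (wn n) x \<and> 0 \<le> x 0 \<and> x 0 \<le> 1"
    unfolding wn_def using per_stage[OF Qpos] by blast
  then obtain xs where xs: "\<And>n. pmin (Qn n) (Pn n) (xs n)" "\<And>n. ordR (wn n) (xs n)"
    "\<And>n. 0 \<le> xs n 0" "\<And>n. xs n 0 \<le> 1"
    by metis
  have wcomp: "\<bar>wn n $ m - w $ m\<bar> \<le> 1 / real_of_int (Qn n)" for n m
  proof -
    have q: "0 < real_of_int (Qn n)" using Qpos[of n] by simp
    let ?f = "\<lfloor>real_of_int (Qn n) * w$m\<rfloor>"
    have "real_of_int (Qn n) * w$m - 1 < real_of_int ?f" "real_of_int ?f \<le> real_of_int (Qn n) * w$m" by linarith+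
    hence "\<bar>real_of_int ?f - real_of_int (Qn n) * w$m\<bar> \<le> 1" unfolding abs_le_iff by linarith
    hence d: "\<bar>real_of_int ?f - real_of_int (Qn n) * w$m\<bar> / real_of_int (Qn n) \<le> 1 / real_of_int (Qn n)"
      using q by (intro divide_right_mono) auto
    have "real_of_int ?f / real_of_int (Qn n) - w$m = (real_of_int ?f - real_of_int (Qn n) * w$m) / real_of_int (Qn n)"
      using q by (simp add: field_simps)
    hence "\<bar>real_of_int ?f / real_of_int (Qn n) - w$m\<bar> = \<bar>real_of_int ?f - real_of_int (Qn n) * w$m\<bar> / real_of_int (Qn n)"
      using q by simp
    hence "\<bar>real_of_int ?f / real_of_int (Qn n) - w$m\<bar> \<le> 1 / real_of_int (Qn n)" using d by simp
    thus ?thesis by (simp add: wn_def om_def Pn_def)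
  qed
  have ipdiff: "\<bar>ip (wn n) k - ip w k\<bar> \<le> real_of_int (norm1 k) / real_of_int (Qn n)" for n k
  proof -
    have "\<bar>ip (wn n) k - ip w k\<bar> = \<bar>\<Sum>m\<in>UNIV. (wn n $ m - w $ m) * real_of_int (k$m)\<bar>"
      by (simp add: ip_def sum_subtractf algebra_simps)
    also have "\<dots> \<le> (\<Sum>m\<in>UNIV. \<bar>(wn n $ m - w $ m) * real_of_int (k$m)\<bar>)" by (rule sum_abs)
    also have "\<dots> \<le> (\<Sum>m\<in>UNIV. 1 / real_of_int (Qn n) * \<bar>real_of_int (k$m)\<bar>)"
    proof (intro sum_mono)
      fix m
      have "\<bar>wn n $ m - w $ m\<bar> * \<bar>real_of_int (k $ m)\<bar> \<le> 1 / real_of_int (Qn n) * \<bar>real_of_int (k $ m)\<bar>"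
        using wcomp[of n m] by (intro mult_right_mono) auto
      thus "\<bar>(wn n $ m - w $ m) * real_of_int (k $ m)\<bar> \<le> 1 / real_of_int (Qn n) * \<bar>real_of_int (k $ m)\<bar>"
        by (simp add: abs_mult)
    qed
    also have "\<dots> = real_of_int (norm1 k) / real_of_int (Qn n)"
      by (simp add: norm1_def sum_divide_distrib)
    finally show ?thesis .
  qed
  have ipconv: "(\<lambda>n. ip (wn n) k) \<longlonglongrightarrow> ip w k" for k
  proof -
    have "(\<lambda>n. ip (wn n) k - ip w k) \<longlonglongrightarrow> 0"
    proof (rule Lim_null_comparison[of _ "\<lambda>n. real_of_int (norm1 k) / real n"])
      show "\<forall>\<^sub>F n in sequentially. norm (ip (wn n) k - ip w k) \<le> real_of_int (norm1 k) / real n"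
        using eventually_gt_at_top[of 0]
      proof eventually_elim
        fix n :: nat assume n: "0 < n"
        have "real_of_int (norm1 k) / real_of_int (Qn n) \<le> real_of_int (norm1 k) / real n"
          using n norm1_nonneg[of k] by (intro divide_left_mono) (auto simp: Qn_def)
        thus "norm (ip (wn n) k - ip w k) \<le> real_of_int (norm1 k) / real n"
          using ipdiff[of n k] by simp
      qed
      show "(\<lambda>n. real_of_int (norm1 k) / real n) \<longlonglongrightarrow> 0" by (rule lim_const_over_n)
    qed
    thus ?thesis by (simp add: LIM_zero_iff)
  qed
  define b where "b (i::int^'d) = 2 + \<bar>ip w i\<bar> + real_of_int (norm1 i)" for i
  have xb: "xs n \<in> PiE UNIV (\<lambda>i. {- b i .. b i})" for n
  proof -
    have "\<bar>xs n i\<bar> \<le> b i" for i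
    proof -
      have "\<bar>xs n (0 + i) - xs n 0 - ip (wn n) i\<bar> \<le> 1" using ordR_est[OF xs(2)] .
      moreover have "\<bar>ip (wn n) i - ip w i\<bar> \<le> real_of_int (norm1 i)"
      proof -
        have q1: "1 \<le> real_of_int (Qn n)" by (simp add: Qn_def)
        have "real_of_int (norm1 i) / real_of_int (Qn n) \<le> real_of_int (norm1 i) / 1"
          using q1 norm1_nonneg[of i] by (intro divide_left_mono) auto
        thus ?thesis using ipdiff[of n i] by simp
      qed
      ultimately show ?thesis using xs(3)[of n] xs(4)[of n] unfolding b_def by (simp add: abs_le_iff; linarith)
    qed
    hence "- b i \<le> xs n i \<and> xs n i \<le> b i" for i by (metis abs_le_iff minus_le_iff)
    thus ?thesis by auto
  qed
  have "seq_compact (PiE UNIV (\<lambda>i. {- b i .. b i}))"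
    by (intro compact_imp_seq_compact compact_PiE_Icc)
  then obtain x sg where sg: "strict_mono sg" and lim: "(xs \<circ> sg) \<longlonglongrightarrow> x"
    using xb unfolding seq_compact_def by metis
  have limp: "\<forall>i. (\<lambda>n. xs (sg n) i) \<longlonglongrightarrow> x i"
    using lim tendsto_fun_iff[of "xs \<circ> sg" x sequentially] by (simp add: comp_def)
  have ipsg: "(\<lambda>n. ip (wn (sg n)) k) \<longlonglongrightarrow> ip w k" for k
    using LIMSEQ_subseq_LIMSEQ[OF ipconv sg] by (simp add: comp_def)
  have est: "\<bar>x (i + k) - x i - ip w k\<bar> \<le> 1" for i k
  proof -
    have "(\<lambda>n. \<bar>xs (sg n) (i + k) - xs (sg n) i - ip (wn (sg n)) k\<bar>) \<longlonglongrightarrow> \<bar>x (i + k) - x i - ip w k\<bar>"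
      using limp ipsg by (intro tendsto_rabs tendsto_diff) auto
    moreover have "\<bar>xs (sg n) (i + k) - xs (sg n) i - ip (wn (sg n)) k\<bar> \<le> 1" for n
      using ordR_est[OF xs(2)] .
    ultimately show ?thesis by (intro LIMSEQ_le_const2) auto
  qed
  have bk: "birkhoff x"
    unfolding birkhoff_def
  proof (intro allI)
    fix k l
    show "x \<le> tau k l x \<or> tau k l x \<le> x"
    proof (rule ccontr)
      assume "\<not> ?thesis"
      then obtain i1 i2 where i1: "tau k l x i1 < x i1" and i2: "x i2 < tau k l x i2"
        by (auto simp: le_fun_def not_le)
      have c1: "(\<lambda>n. x' n) \<longlonglongrightarrow> x i1 - tau k l x i1" if "x' = (\<lambda>n. xs (sg n) i1 - tau k l (xs (sg n)) i1)" for x'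
        using that limp by (auto simp: tau_def intro!: tendsto_intros)
      have c2: "(\<lambda>n. x' n) \<longlonglongrightarrow> tau k l x i2 - x i2" if "x' = (\<lambda>n. tau k l (xs (sg n)) i2 - xs (sg n) i2)" for x'
        using that limp by (auto simp: tau_def intro!: tendsto_intros)
      have e1: "eventually (\<lambda>n. 0 < xs (sg n) i1 - tau k l (xs (sg n)) i1) sequentially"
      proof -
        have "0 < x i1 - tau k l x i1" using i1 by simp
        thus ?thesis by (rule order_tendstoD(1)[OF c1[OF refl]])
      qed
      have e2: "eventually (\<lambda>n. 0 < tau k l (xs (sg n)) i2 - xs (sg n) i2) sequentially"
      proof -
        have "0 < tau k l x i2 - x i2" using i2 by simp
        thus ?thesis by (rule order_tendstoD(1)[OF c2[OF refl]])
      qed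
      have "eventually (\<lambda>n. 0 < xs (sg n) i1 - tau k l (xs (sg n)) i1 \<and> 0 < tau k l (xs (sg n)) i2 - xs (sg n) i2) sequentially"
        by (rule eventually_conj[OF e1 e2])
      then obtain N where N: "\<forall>n\<ge>N. 0 < xs (sg n) i1 - tau k l (xs (sg n)) i1 \<and> 0 < tau k l (xs (sg n)) i2 - xs (sg n) i2"
        unfolding eventually_sequentially by blast
      define n where "n = N"
      have n1: "0 < xs (sg n) i1 - tau k l (xs (sg n)) i1" and n2: "0 < tau k l (xs (sg n)) i2 - xs (sg n) i2"
        using N unfolding n_def by auto
      have "birkhoff (xs (sg n))" using ordR_Bbar[OF xs(2)] by (simp add: Bbar_def)
      hence "xs (sg n) \<le> tau k l (xs (sg n)) \<or> tau k l (xs (sg n)) \<le> xs (sg n)" unfolding birkhoff_def by blast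
      thus False
      proof (elim disjE)
        assume "xs (sg n) \<le> tau k l (xs (sg n))"
        hence "xs (sg n) i1 \<le> tau k l (xs (sg n)) i1" by (simp add: le_fun_def)
        thus False using n1 by linarith
      next
        assume "tau k l (xs (sg n)) \<le> xs (sg n)"
        hence "tau k l (xs (sg n)) i2 \<le> xs (sg n) i2" by (simp add: le_fun_def)
        thus False using n2 by linarith
      qed
    qed
  qed
  have gm: "gmD x"
  proof (rule gmD_lim[OF limp])
    fix A :: "(int^'d) set" and y :: "int^'d \<Rightarrow> real"
    assume fA: "finite A" and y: "\<forall>i. i \<notin> A \<longrightarrow> y i = 0"
    define M where "M = real_of_int (Max (insert 0 (norm1 ` A)))"
    have aM: "\<bar>real_of_int (a$m)\<bar> \<le> M" if "a \<in> A" for a m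
    proof -
      have "norm1 a \<le> Max (insert 0 (norm1 ` A))" using fA that by (intro Max_ge) auto
      hence "real_of_int \<bar>a$m\<bar> \<le> M" using comp_le_norm1[of a m] unfolding M_def by linarith
      thus ?thesis by simp
    qed
    obtain N :: nat where N: "M + r < real N" using reals_Archimedean2 by blast
    show "eventually (\<lambda>n. 0 \<le> D (xs (sg n)) A y) sequentially"
    proof (rule eventually_sequentiallyI[of N])
      fix n assume nN: "N \<le> n"
      have "n \<le> sg n" using seq_suble[OF sg] .
      hence big: "M + r < real (sg n) + 1" using N nN by linarith
      define c :: "int^'d" where "c = (\<chi> m. - (int (sg n) + 1))"
      have M0: "0 \<le> M" unfolding M_def using fA by (simp add: Max_ge)
      have Q: "Qn (sg n) > 0" by (rule Qpos)
      have Qr: "2 * r < real_of_int (Qn (sg n))" using big M0 by (simp add: Qn_def)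
      have win: "\<forall>a\<in>A. \<forall>m. real_of_int (c$m) + r < real_of_int (a$m) \<and>
          real_of_int (a$m) + r < real_of_int (c$m) + real_of_int (Qn (sg n))"
      proof (intro ballI allI)
        fix a m assume a: "a \<in> A"
        have "\<bar>real_of_int (a$m)\<bar> \<le> M" using aM[OF a] .
        thus "real_of_int (c$m) + r < real_of_int (a$m) \<and>
          real_of_int (a$m) + r < real_of_int (c$m) + real_of_int (Qn (sg n))"
          using big by (simp add: c_def Qn_def abs_le_iff; linarith)
      qed
      show "0 \<le> D (xs (sg n)) A y" by (rule window[OF Q Qr xs(1) fA y win])
    qed
  qed
  show ?thesis using gm bk est by blast
qed

lemma main_LS: "\<exists>x\<in>Bbar w. global_minimizer S r x"
proof -
  obtain x where gx: "gmD x" and bk: "birkhoff x" and est: "\<And>i k. \<bar>x (i + k) - x i - ip w k\<bar> \<le> 1"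
    using approx_stage[of w] by blast
  define H where "H = {h :: (int^'d) \<times> int. 0 \<le> ip w (fst h) + real_of_int (snd h)}"
  have "\<exists>z. gmD z \<and> (\<forall>h\<in>H. z \<le> tau (fst h) (snd h) z) \<and> (\<forall>i. x i - 1 \<le> z i \<and> z i \<le> x i)"
  proof (rule inf_trick[where G = "\<lambda>a. \<exists>h\<in>H. a = tau (fst h) (snd h) x"])
    show "(0, 0) \<in> H" by (simp add: H_def ip_zero)
    show "(fst g + fst h, snd g + snd h) \<in> H" if "g \<in> H" "h \<in> H" for g h
      using that by (simp add: H_def ip_add)
    show "\<exists>h'\<in>H. tau (fst h) (snd h) x = tau (fst h') (snd h') x" if "h \<in> H" for h
      using that by blast
    show "\<exists>h\<in>H. (\<lambda>i. min (a i) (b i)) = tau (fst h) (snd h) x"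
      if ha: "\<exists>h\<in>H. a = tau (fst h) (snd h) x" and hb: "\<exists>h\<in>H. b = tau (fst h) (snd h) x" for a b
    proof -
      obtain h where h: "h \<in> H" "a = tau (fst h) (snd h) x" using ha by blast
      obtain g where g: "g \<in> H" "b = tau (fst g) (snd g) x" using hb by blast
      have ab: "a = tau (fst g) (snd g) (tau (fst h - fst g) (snd h - snd g) x)"
        using h(2) by (simp add: tau_tau)
      have "x \<le> tau (fst h - fst g) (snd h - snd g) x \<or> tau (fst h - fst g) (snd h - snd g) x \<le> x"
        using bk unfolding birkhoff_def by blast
      hence "b \<le> a \<or> a \<le> b" using ab g(2) tau_mono by metis
      moreover have "b \<le> a \<Longrightarrow> (\<lambda>i. min (a i) (b i)) = b"
        by (rule ext) (simp add: le_fun_def min_absorb2)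
      moreover have "a \<le> b \<Longrightarrow> (\<lambda>i. min (a i) (b i)) = a"
        by (rule ext) (simp add: le_fun_def min_absorb1)
      ultimately have "(\<lambda>i. min (a i) (b i)) = b \<or> (\<lambda>i. min (a i) (b i)) = a" by blast
      thus ?thesis using h g by blast
    qed
    show "gmD z" if hg: "\<forall>N. \<exists>h\<in>H. g N = tau (fst h) (snd h) x" and hz: "\<forall>i. (\<lambda>N. g N i) \<longlonglongrightarrow> z i" for g z
    proof (rule gmD_lim[OF hz])
      fix A :: "(int^'d) set" and y :: "int^'d \<Rightarrow> real"
      assume fA: "finite A" and y: "\<forall>i. i \<notin> A \<longrightarrow> y i = 0"
      have "0 \<le> D (g N) A y" for N
      proof -
        obtain h where "g N = tau (fst h) (snd h) x" using hg by blast
        hence "gmD (g N)" using gmD_tau[OF gx] by simp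
        thus ?thesis unfolding gmD_def using fA y by blast
      qed
      thus "eventually (\<lambda>N. 0 \<le> D (g N) A y) sequentially" by simp
    qed
    show "x i - 1 \<le> tau (fst h) (snd h) x i" if "h \<in> H" for h i
    proof -
      have "0 \<le> ip w (fst h) + real_of_int (snd h)" using that by (simp add: H_def)
      moreover have "\<bar>x (i + fst h) - x i - ip w (fst h)\<bar> \<le> 1" by (rule est)
      ultimately show ?thesis by (simp add: tau_def abs_le_iff; linarith)
    qed
  qed
  then obtain z where z: "gmD z" "\<forall>h\<in>H. z \<le> tau (fst h) (snd h) z" by blast
  have "ordR w z" unfolding ordR_def using z(2) by (auto simp: H_def)
  hence "z \<in> Bbar w" by (rule ordR_Bbar)
  moreover have "global_minimizer S r z" using z(1) by (rule gm_of_gmD)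
  ultimately show ?thesis by blast
qed

end

theorem mainTheorem7:
  fixes S :: "int ^ 'd::finite \<Rightarrow> (int ^ 'd \<Rightarrow> real) \<Rightarrow> real"
    and r :: real
  assumes A_r: "r > 0"
    and A_local: "\<And>j x y. (\<forall>k\<in>lball j r. x k = y k) \<Longrightarrow> S j x = S j y"
    and A_C2: "\<And>j. C2 (S j)"
    and B: "\<And>j k l x. S j (tau k l x) = S (j + k) x"
    and C_bdd: "\<And>j. \<exists>m. \<forall>x. S j x \<ge> m"
    and C_coerc: "\<And>j k. norm1 (k - j) = 1 \<Longrightarrow>
        filterlim (S j) at_top (filtercomap (\<lambda>x. \<bar>x k - x j\<bar>) at_top)"
    and D1: "\<And>i k j x. i \<noteq> k \<Longrightarrow> pd i (pd k (S j)) x \<le> 0"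
    and D2: "\<And>i k x. norm1 (i - k) = 1 \<Longrightarrow> pd i (pd k (S i)) x < 0"
    and E: "\<exists>C. \<forall>i k j x. \<bar>pd i (pd k (S j)) x\<bar> \<le> C"
  shows "\<forall>\<omega> :: real ^ 'd. \<exists>x\<in>Bbar \<omega>. global_minimizer S r x"
proof -
  interpret LS S r
    by (unfold_locales) (fact A_r A_local A_C2 B C_bdd C_coerc D1)+
  show ?thesis using main_LS by blast
qed

end
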